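(* Let $(X,\tau)$ be a fuzzifying topological space such that $\tau_P(A\cap B)\ge\min(\tau_P(A),\tau_P(B))$ for all $A,B\subseteq X$, and let $A\subseteq X$. Then $$\max\Big(0,\ T_2^P(X,\tau)+L_PC(A,\tau/A)+\inf_{x\in X}Cl_P(A)(x)-2\Big)\le\tau_P(A),$$ i.e. $\vDash T_2^P(X,\tau)\otimes L_PC(A,\tau/A)\otimes(Cl_P(A)\equiv X)\to A\in\tau_P$.
   Context: Łukasiewicz semantics: $[\varphi\otimes\psi]=\max(0,[\varphi]+[\psi]-1)$, $[\varphi\to\psi]=\min(1,1-[\varphi]+[\psi])$; $[Cl_P(A)\equiv X]=\inf_{x\in X}Cl_P(A)(x)$. A fuzzifying topology on $X$ is $\tau:P(X)\to[0,1]$ with $\tau(X)=1$, $\tau(A\cap B)\ge\min(\tau(A),\tau(B))$, $\tau(\bigcup A_\lambda)\ge\inf\tau(A_\lambda)$. $N_x(A)=\sup_{x\in B\subseteq A}\tau(B)$; $Cl(A)(x)=1-N_x(X\setminus A)$; for $\mu:X\to[0,1]$, $Int(\mu)(x)=\sup_{x\in B}\min(\tau(B),\inf_{y\in B}\mu(y))$. Pre-open degrees $\tau_P(A)=\inf_{x\in A}Int(Cl(A))(x)$; $N^P_x(A)=\sup_{x\in B\subseteq A}\tau_P(B)$; $Cl_P(A)(x)=1-N^P_x(X\setminus A)$. $T_2^P(X,\tau)=\inf_{x\ne y}\sup\{\min(N^P_x(B),N^P_y(C)):B\cap C=\emptyset\}$. For $G\subseteq X$: $(\tau_P/G)(B)=\sup\{\tau_P(V):V\cap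 G=B\}$. Compactness degree of $G$ w.r.t. $\rho:P(G)\to[0,1]$: with $K(\Re,G)=\inf_{x\in G}\sup_{B\ni x}\Re(B)$, $[\Re\subseteq\rho]=\inf_B\min(1,1-\Re(B)+\rho(B))$, $\wp\le\Re$ pointwise, $FF(\wp)=1-\inf\{\delta\in[0,1]:\{B:\wp(B)>\delta\}\text{ finite}\}$, $\Gamma(G,\rho)=\inf_{\Re}\min\big(1,1-\max(0,K(\Re,G)+[\Re\subseteq\rho]-1)+\sup_{\wp\le\Re}\max(0,K(\wp,G)+FF(\wp)-1)\big)$. With $N^{P^A}_x(G)=\sup_{x\in C\subseteq G}(\tau_P/A)(C)$, $L_PC(A,\tau/A)=\inf_{x\in A}\sup_{G\subseteq A}\max(0,N^{P^A}_x(G)+\Gamma(G,\tau_P/G)-1)$. *)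

theory Defs
  imports Complex_Main
begin

text \<open>The space X is the whole type 'a (UNIV). Truth values are reals in [0,1].
  Suprema/infima are taken in the complete lattice [0,1]: empty sup = 0, empty inf = 1.\<close>

definition sup01 :: "real set \<Rightarrow> real" where
  "sup01 S = (if S = {} then 0 else Sup S)"

definition inf01 :: "real set \<Rightarrow> real" where
  "inf01 S = (if S = {} then 1 else Inf S)"

definition fuzzifying_topology :: "('a set \<Rightarrow> real) \<Rightarrow> bool" where
  "fuzzifying_topology \<tau> \<longleftrightarrow>
     (\<forall>A. 0 \<le> \<tau> A \<and> \<tau> A \<le> 1) \<and>
     \<tau> UNIV = 1 \<and>
     (\<forall>A B. \<tau> (A \<inter> B) \<ge> min (\<tau> A) (\<tau> B)) \<and>
     (\<forall>\<A>. \<tau> (\<Union>\<A>) \<ge> inf01 (\<tau> ` \<A>))"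

definition nbhd :: "('a set \<Rightarrow> real) \<Rightarrow> 'a \<Rightarrow> 'a set \<Rightarrow> real" where
  "nbhd \<tau> x A = sup01 {\<tau> B | B. x \<in> B \<and> B \<subseteq> A}"

definition fclosure :: "('a set \<Rightarrow> real) \<Rightarrow> 'a set \<Rightarrow> 'a \<Rightarrow> real" where
  "fclosure \<tau> A x = 1 - nbhd \<tau> x (- A)"

definition finterior :: "('a set \<Rightarrow> real) \<Rightarrow> ('a \<Rightarrow> real) \<Rightarrow> 'a \<Rightarrow> real" where
  "finterior \<tau> \<mu> x = sup01 {min (\<tau> B) (inf01 (\<mu> ` B)) | B. x \<in> B}"

definition preopen :: "('a set \<Rightarrow> real) \<Rightarrow> 'a set \<Rightarrow> real" where
  "preopen \<tau> A = inf01 ((\<lambda>x. finterior \<tau> (fclosure \<tau> A) x) ` A)"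

definition pnbhd :: "('a set \<Rightarrow> real) \<Rightarrow> 'a \<Rightarrow> 'a set \<Rightarrow> real" where
  "pnbhd \<tau> x A = sup01 {preopen \<tau> B | B. x \<in> B \<and> B \<subseteq> A}"

definition pclosure :: "('a set \<Rightarrow> real) \<Rightarrow> 'a set \<Rightarrow> 'a \<Rightarrow> real" where
  "pclosure \<tau> A x = 1 - pnbhd \<tau> x (- A)"

definition T2P :: "('a set \<Rightarrow> real) \<Rightarrow> real" where
  "T2P \<tau> = inf01 {sup01 {min (pnbhd \<tau> x B) (pnbhd \<tau> y C) | B C. B \<inter> C = {}} | x y. x \<noteq> y}"

definition preopen_rel :: "('a set \<Rightarrow> real) \<Rightarrow> 'a set \<Rightarrow> 'a set \<Rightarrow> real" where
  "preopen_rel \<tau> G B = sup01 {preopen \<tau> V | V. V \<inter> G = B}"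

text \<open>Fuzzy families of subsets of G: maps P(G) \<rightarrow> [0,1], represented as functions on
  'a set that vanish outside Pow G.\<close>
definition fuzzy_family :: "'a set \<Rightarrow> ('a set \<Rightarrow> real) \<Rightarrow> bool" where
  "fuzzy_family G R \<longleftrightarrow> (\<forall>B. B \<subseteq> G \<longrightarrow> 0 \<le> R B \<and> R B \<le> 1) \<and> (\<forall>B. \<not> B \<subseteq> G \<longrightarrow> R B = 0)"

definition Kcov :: "('a set \<Rightarrow> real) \<Rightarrow> 'a set \<Rightarrow> real" where
  "Kcov R G = inf01 {sup01 {R B | B. x \<in> B \<and> B \<subseteq> G} | x. x \<in> G}"

definition fsubset :: "'a set \<Rightarrow> ('a set \<Rightarrow> real) \<Rightarrow> ('a set \<Rightarrow> real) \<Rightarrow> real" where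
  "fsubset G R \<rho> = inf01 {min 1 (1 - R B + \<rho> B) | B. B \<subseteq> G}"

definition FF :: "'a set \<Rightarrow> ('a set \<Rightarrow> real) \<Rightarrow> real" where
  "FF G P = 1 - inf01 {\<delta>. 0 \<le> \<delta> \<and> \<delta> \<le> 1 \<and> finite {B. B \<subseteq> G \<and> P B > \<delta>}}"

definition Gamma :: "'a set \<Rightarrow> ('a set \<Rightarrow> real) \<Rightarrow> real" where
  "Gamma G \<rho> = inf01 {min 1 (1 - max 0 (Kcov R G + fsubset G R \<rho> - 1)
        + sup01 {max 0 (Kcov P G + FF G P - 1) | P. fuzzy_family G P \<and> (\<forall>B. B \<subseteq> G \<longrightarrow> P B \<le> R B)})
     | R. fuzzy_family G R}"

definition pnbhd_rel :: "('a set \<Rightarrow> real) \<Rightarrow> 'a set \<Rightarrow> 'a \<Rightarrow> 'a set \<Rightarrow> real" where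
  "pnbhd_rel \<tau> A x G = sup01 {preopen_rel \<tau> A C | C. x \<in> C \<and> C \<subseteq> G}"

definition LPC :: "('a set \<Rightarrow> real) \<Rightarrow> 'a set \<Rightarrow> real" where
  "LPC \<tau> A = inf01 {sup01 {max 0 (pnbhd_rel \<tau> A x G + Gamma G (preopen_rel \<tau> G) - 1) | G. G \<subseteq> A}
                    | x. x \<in> A}"

end

theory Submission imports Defs begin

lemma sup01_bounds: "(\<forall>x\<in>S. 0 \<le> x \<and> x \<le> 1) \<Longrightarrow> 0 \<le> sup01 S \<and> sup01 S \<le> 1"
proof -
  assume h: "\<forall>x\<in>S. 0 \<le> x \<and> x \<le> 1"
  show ?thesis
  proof (cases "S = {}")
    case True then show ?thesis by (simp add: sup01_def)
  next
    case False
    then obtain x where x: "x \<in> S" by blast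
    have bdd: "bdd_above S" using h by (intro bdd_aboveI[of _ 1]) auto
    have "x \<le> Sup S" using cSup_upper[OF x bdd] .
    moreover have "Sup S \<le> 1" using False h by (intro cSup_least) auto
    ultimately show ?thesis using False h x by (auto simp: sup01_def)
  qed
qed

lemma inf01_bounds: "(\<forall>x\<in>S. 0 \<le> x \<and> x \<le> 1) \<Longrightarrow> 0 \<le> inf01 S \<and> inf01 S \<le> 1"
proof -
  assume h: "\<forall>x\<in>S. 0 \<le> x \<and> x \<le> 1"
  show ?thesis
  proof (cases "S = {}")
    case True then show ?thesis by (simp add: inf01_def)
  next
    case False
    then obtain x where x: "x \<in> S" by blast
    have bdd: "bdd_below S" using h by (intro bdd_belowI[of _ 0]) auto
    have "Inf S \<le> x" using cInf_lower[OF x bdd] .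
    moreover have "0 \<le> Inf S" using False h by (intro cInf_greatest) auto
    ultimately show ?thesis using False h x by (auto simp: inf01_def)
  qed
qed

lemma sup01_upper: "x \<in> S \<Longrightarrow> \<forall>s\<in>S. s \<le> 1 \<Longrightarrow> x \<le> sup01 S"
proof -
  assume x: "x \<in> S" and h: "\<forall>s\<in>S. s \<le> 1"
  have bdd: "bdd_above S" using h by (intro bdd_aboveI[of _ 1]) auto
  show ?thesis using cSup_upper[OF x bdd] x by (auto simp: sup01_def)
qed

lemma inf01_lower: "x \<in> S \<Longrightarrow> \<forall>s\<in>S. 0 \<le> s \<Longrightarrow> inf01 S \<le> x"
proof -
  assume x: "x \<in> S" and h: "\<forall>s\<in>S. 0 \<le> s"
  have bdd: "bdd_below S" using h by (intro bdd_belowI[of _ 0]) auto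
  show ?thesis using cInf_lower[OF x bdd] x by (auto simp: inf01_def)
qed

lemma sup01_gt: "a < sup01 S \<Longrightarrow> 0 \<le> a \<Longrightarrow> \<exists>x\<in>S. a < x"
  by (cases "S = {}") (auto simp: sup01_def intro: less_cSupD)

lemma inf01_lt: "inf01 S < a \<Longrightarrow> a \<le> 1 \<Longrightarrow> \<exists>x\<in>S. x < a"
  by (cases "S = {}") (auto simp: inf01_def intro: cInf_lessD)

lemma inf01_greatest: "(\<forall>x\<in>S. a \<le> x) \<Longrightarrow> a \<le> 1 \<Longrightarrow> a \<le> inf01 S"
  by (cases "S = {}") (auto simp: inf01_def intro: cInf_greatest)

lemma sup01_least: "(\<forall>x\<in>S. x \<le> a) \<Longrightarrow> 0 \<le> a \<Longrightarrow> sup01 S \<le> a"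
  by (cases "S = {}") (auto simp: sup01_def intro: cSup_least)

lemma topo_b: "fuzzifying_topology \<tau> \<Longrightarrow> 0 \<le> \<tau> A \<and> \<tau> A \<le> 1"
  by (simp add: fuzzifying_topology_def)

lemma nbhd_b: "fuzzifying_topology \<tau> \<Longrightarrow> 0 \<le> nbhd \<tau> x A \<and> nbhd \<tau> x A \<le> 1"
  unfolding nbhd_def by (rule sup01_bounds) (auto dest: topo_b)

lemma fclosure_b: "fuzzifying_topology \<tau> \<Longrightarrow> 0 \<le> fclosure \<tau> A x \<and> fclosure \<tau> A x \<le> 1"
  unfolding fclosure_def using nbhd_b[of \<tau> x "-A"] by auto

lemma finterior_b: "fuzzifying_topology \<tau> \<Longrightarrow> (\<forall>z. 0 \<le> \<mu> z \<and> \<mu> z \<le> 1) \<Longrightarrow>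
   0 \<le> finterior \<tau> \<mu> x \<and> finterior \<tau> \<mu> x \<le> 1"
  unfolding finterior_def
  apply (rule sup01_bounds)
  apply clarify
  subgoal for u B
    using topo_b[of \<tau> B] inf01_bounds[of "\<mu> ` B"] by auto
  done

lemma preopen_b: "fuzzifying_topology \<tau> \<Longrightarrow> 0 \<le> preopen \<tau> A \<and> preopen \<tau> A \<le> 1"
  unfolding preopen_def
  apply (rule inf01_bounds)
  using finterior_b[of \<tau> "fclosure \<tau> A"] fclosure_b[of \<tau> A] by auto

lemma pnbhd_b: "fuzzifying_topology \<tau> \<Longrightarrow> 0 \<le> pnbhd \<tau> x A \<and> pnbhd \<tau> x A \<le> 1"
  unfolding pnbhd_def by (rule sup01_bounds) (auto dest: preopen_b)

lemma pclosure_b: "fuzzifying_topology \<tau> \<Longrightarrow> 0 \<le> pclosure \<tau> A x \<and> pclosure \<tau> A x \<le> 1"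
  unfolding pclosure_def using pnbhd_b[of \<tau> x "-A"] by auto

lemma preopen_rel_b: "fuzzifying_topology \<tau> \<Longrightarrow> 0 \<le> preopen_rel \<tau> G B \<and> preopen_rel \<tau> G B \<le> 1"
  unfolding preopen_rel_def by (rule sup01_bounds) (auto dest: preopen_b)

lemma pnbhd_rel_b: "fuzzifying_topology \<tau> \<Longrightarrow> 0 \<le> pnbhd_rel \<tau> A x G \<and> pnbhd_rel \<tau> A x G \<le> 1"
  unfolding pnbhd_rel_def by (rule sup01_bounds) (auto dest: preopen_rel_b)

lemma T2P_b: "fuzzifying_topology \<tau> \<Longrightarrow> 0 \<le> T2P \<tau> \<and> T2P \<tau> \<le> 1"
  unfolding T2P_def
  apply (rule inf01_bounds)
  apply clarify
  apply (rule sup01_bounds)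
  apply clarify
  subgoal for u x y v B C using pnbhd_b[of \<tau> x B] pnbhd_b[of \<tau> y C] by auto
  done

lemma ff_b: "fuzzy_family G R \<Longrightarrow> 0 \<le> R B \<and> R B \<le> 1"
  unfolding fuzzy_family_def by (cases "B \<subseteq> G") auto

lemma Kcov_b: "(\<forall>B. 0 \<le> R B \<and> R B \<le> 1) \<Longrightarrow> 0 \<le> Kcov R G \<and> Kcov R G \<le> 1"
  unfolding Kcov_def
  apply (rule inf01_bounds)
  apply clarify
  apply (rule sup01_bounds)
  by auto

lemma fsubset_b: "(\<forall>B. 0 \<le> R B \<and> R B \<le> 1) \<Longrightarrow> (\<forall>B. 0 \<le> \<rho> B \<and> \<rho> B \<le> 1) \<Longrightarrow>
   0 \<le> fsubset G R \<rho> \<and> fsubset G R \<rho> \<le> 1"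
  unfolding fsubset_def
  apply (rule inf01_bounds)
  apply clarify
  subgoal for u B using spec[of _ B] by fastforce
  done

lemma FF_b: "0 \<le> FF G P \<and> FF G P \<le> 1"
proof -
  have "0 \<le> inf01 {\<delta>. 0 \<le> \<delta> \<and> \<delta> \<le> 1 \<and> finite {B. B \<subseteq> G \<and> P B > \<delta>}} \<and>
        inf01 {\<delta>. 0 \<le> \<delta> \<and> \<delta> \<le> 1 \<and> finite {B. B \<subseteq> G \<and> P B > \<delta>}} \<le> 1"
    by (rule inf01_bounds) auto
  then show ?thesis unfolding FF_def by linarith
qed

lemma gterm_b: "fuzzy_family G R \<Longrightarrow> (\<forall>B. 0 \<le> \<rho> B \<and> \<rho> B \<le> 1) \<Longrightarrow>
  0 \<le> min 1 (1 - max 0 (Kcov R G + fsubset G R \<rho> - 1)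
        + sup01 {max 0 (Kcov P G + FF G P - 1) | P. fuzzy_family G P \<and> (\<forall>B. B \<subseteq> G \<longrightarrow> P B \<le> R B)})
  \<and> min 1 (1 - max 0 (Kcov R G + fsubset G R \<rho> - 1)
        + sup01 {max 0 (Kcov P G + FF G P - 1) | P. fuzzy_family G P \<and> (\<forall>B. B \<subseteq> G \<longrightarrow> P B \<le> R B)}) \<le> 1"
proof -
  assume R: "fuzzy_family G R" and r: "\<forall>B. 0 \<le> \<rho> B \<and> \<rho> B \<le> 1"
  have Rb: "\<forall>B. 0 \<le> R B \<and> R B \<le> 1" using ff_b[OF R] by blast
  have "0 \<le> sup01 {max 0 (Kcov P G + FF G P - 1) | P. fuzzy_family G P \<and> (\<forall>B. B \<subseteq> G \<longrightarrow> P B \<le> R B)}"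
    apply (rule conjunct1[OF sup01_bounds])
    apply clarify
    subgoal for u P using Kcov_b[of P G] ff_b[of G P] FF_b[of G P] by fastforce
    done
  then show ?thesis using Kcov_b[OF Rb, of G] fsubset_b[OF Rb r, of G] by auto
qed

lemma Gamma_b: "(\<forall>B. 0 \<le> \<rho> B \<and> \<rho> B \<le> 1) \<Longrightarrow> 0 \<le> Gamma G \<rho> \<and> Gamma G \<rho> \<le> 1"
  unfolding Gamma_def
  apply (rule inf01_bounds)
  apply clarify
  subgoal for u R using gterm_b[of G R \<rho>] by blast
  done

lemma Gamma_le: "fuzzy_family G R \<Longrightarrow> (\<forall>B. 0 \<le> \<rho> B \<and> \<rho> B \<le> 1) \<Longrightarrow>
  Gamma G \<rho> \<le> min 1 (1 - max 0 (Kcov R G + fsubset G R \<rho> - 1)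
        + sup01 {max 0 (Kcov P G + FF G P - 1) | P. fuzzy_family G P \<and> (\<forall>B. B \<subseteq> G \<longrightarrow> P B \<le> R B)})"
  unfolding Gamma_def
  apply (rule inf01_lower)
   apply blast
  apply clarify
  subgoal for u R' using gterm_b[of G R' \<rho>] by blast
  done

lemma LPC_b: "fuzzifying_topology \<tau> \<Longrightarrow> 0 \<le> LPC \<tau> A \<and> LPC \<tau> A \<le> 1"
  unfolding LPC_def
  apply (rule inf01_bounds)
  apply clarify
  apply (rule sup01_bounds)
  apply clarify
  subgoal for u x v G
    using pnbhd_rel_b[of \<tau> A x G] Gamma_b[of "preopen_rel \<tau> G" G] preopen_rel_b[of \<tau> G] by fastforce
  done


lemma preopen_UNIV: "fuzzifying_topology \<tau> \<Longrightarrow> preopen \<tau> UNIV = 1"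
proof -
  assume T: "fuzzifying_topology \<tau>"
  have cl: "fclosure \<tau> UNIV z = 1" for z
    unfolding fclosure_def nbhd_def sup01_def by simp
  have "1 \<le> finterior \<tau> (fclosure \<tau> UNIV) x" for x
  proof -
    have "min (\<tau> UNIV) (inf01 (fclosure \<tau> UNIV ` UNIV)) \<le> finterior \<tau> (fclosure \<tau> UNIV) x"
      unfolding finterior_def
      apply (rule sup01_upper) apply blast
      apply clarify
      subgoal for u B using topo_b[OF T, of B] inf01_bounds[of "fclosure \<tau> UNIV ` B"] fclosure_b[OF T] by fastforce
      done
    moreover have "inf01 (fclosure \<tau> UNIV ` UNIV) = 1" using cl by (simp add: inf01_def)
    ultimately show ?thesis using T by (simp add: fuzzifying_topology_def)
  qed
  then have "1 \<le> preopen \<tau> UNIV" unfolding preopen_def by (intro inf01_greatest) auto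
  then show ?thesis using preopen_b[OF T, of UNIV] by linarith
qed

lemma preopen_Inter:
  assumes T: "fuzzifying_topology \<tau>"
    and pre: "\<forall>U V. preopen \<tau> (U \<inter> V) \<ge> min (preopen \<tau> U) (preopen \<tau> V)"
    and F: "finite F" and a: "a \<le> 1" and h: "\<forall>B\<in>F. a \<le> preopen \<tau> (f B)"
  shows "a \<le> preopen \<tau> (\<Inter>B\<in>F. f B)"
  using F h
proof (induction F rule: finite_induct)
  case empty
  then show ?case using preopen_UNIV[OF T] a by simp
next
  case (insert x F)
  have "min (preopen \<tau> (f x)) (preopen \<tau> (\<Inter>B\<in>F. f B)) \<le> preopen \<tau> (f x \<inter> (\<Inter>B\<in>F. f B))"
    using pre by blast
  moreover have "a \<le> min (preopen \<tau> (f x)) (preopen \<tau> (\<Inter>B\<in>F. f B))" using insert by simp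
  ultimately have "a \<le> preopen \<tau> (f x \<inter> (\<Inter>B\<in>F. f B))" by (rule order_trans[rotated])
  then show ?case by simp
qed

lemma key:
  assumes T: "fuzzifying_topology \<tau>"
    and pre: "\<forall>U V. preopen \<tau> (U \<inter> V) \<ge> min (preopen \<tau> U) (preopen \<tau> V)"
    and y: "y \<notin> G" and a0: "0 \<le> a" and at: "a < T2P \<tau>"
    and g: "Gamma G (preopen_rel \<tau> G) > 1 - a"
  shows "\<exists>U. y \<in> U \<and> U \<inter> G = {} \<and> a \<le> preopen \<tau> U"
proof -
  have a1: "a \<le> 1" using at T2P_b[OF T] by linarith
  have sep: "\<exists>BC. y \<in> fst BC \<and> z \<in> snd BC \<and> fst BC \<inter> snd BC = {} \<and> a < preopen \<tau> (fst BC) \<and> a < preopen \<tau> (snd BC)"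
    if z: "z \<in> G" for z
  proof -
    have yz: "y \<noteq> z" using y z by blast
    have "T2P \<tau> \<le> sup01 {min (pnbhd \<tau> y B) (pnbhd \<tau> z C) | B C. B \<inter> C = {}}"
      unfolding T2P_def
      apply (rule inf01_lower)
      using yz apply blast
      apply clarify
      apply (rule conjunct1[OF sup01_bounds])
      apply clarify
      subgoal for u x y v B C using pnbhd_b[OF T, of x B] pnbhd_b[OF T, of y C] by auto
      done
    then have "\<exists>u\<in>{min (pnbhd \<tau> y B) (pnbhd \<tau> z C) | B C. B \<inter> C = {}}. a < u"
      using at a0 by (intro sup01_gt) auto
    then obtain B C where BC: "B \<inter> C = {}" "a < min (pnbhd \<tau> y B) (pnbhd \<tau> z C)"
      by blast
    have "a < pnbhd \<tau> y B" using BC by simp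
    then have "\<exists>u\<in>{preopen \<tau> B' | B'. y \<in> B' \<and> B' \<subseteq> B}. a < u"
      unfolding pnbhd_def using a0 by (intro sup01_gt) auto
    then obtain B' where B': "y \<in> B'" "B' \<subseteq> B" "a < preopen \<tau> B'" by blast
    have "a < pnbhd \<tau> z C" using BC by simp
    then have "\<exists>u\<in>{preopen \<tau> C' | C'. z \<in> C' \<and> C' \<subseteq> C}. a < u"
      unfolding pnbhd_def using a0 by (intro sup01_gt) auto
    then obtain C' where C': "z \<in> C'" "C' \<subseteq> C" "a < preopen \<tau> C'" by blast
    show ?thesis using B' C' BC(1) by (intro exI[of _ "(B', C')"]) auto
  qed
  then obtain f where f: "\<forall>z\<in>G. y \<in> fst (f z) \<and> z \<in> snd (f z) \<and> fst (f z) \<inter> snd (f z) = {} \<and>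
      a < preopen \<tau> (fst (f z)) \<and> a < preopen \<tau> (snd (f z))"
    using bchoice[of G] by metis
  define Bf where "Bf z = fst (f z)" for z
  define Cf where "Cf z = snd (f z)" for z
  have f': "\<forall>z\<in>G. y \<in> Bf z \<and> z \<in> Cf z \<and> Bf z \<inter> Cf z = {} \<and> a < preopen \<tau> (Bf z) \<and> a < preopen \<tau> (Cf z)"
    using f unfolding Bf_def Cf_def by blast
  define R where "R B = (if B \<subseteq> G \<and> (\<exists>w\<in>G. B = Cf w \<inter> G) then a else 0)" for B
  have Rff: "fuzzy_family G R" unfolding fuzzy_family_def R_def using a0 a1 by auto
  have Rb: "\<forall>B. 0 \<le> R B \<and> R B \<le> 1" using ff_b[OF Rff] by blast
  let ?\<rho> = "preopen_rel \<tau> G"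
  have rb: "\<forall>B. 0 \<le> ?\<rho> B \<and> ?\<rho> B \<le> 1" using preopen_rel_b[OF T] by blast
  have K: "a \<le> Kcov R G"
    unfolding Kcov_def
  proof (rule inf01_greatest[OF _ a1], clarify)
    fix z assume z: "z \<in> G"
    have "R (Cf z \<inter> G) = a" using z unfolding R_def by auto
    moreover have "R (Cf z \<inter> G) \<le> sup01 {R B | B. z \<in> B \<and> B \<subseteq> G}"
      apply (rule sup01_upper) using z f' apply blast
      using Rb by blast
    ultimately show "a \<le> sup01 {R B | B. z \<in> B \<and> B \<subseteq> G}" by simp
  qed
  have FS: "1 \<le> fsubset G R ?\<rho>"
    unfolding fsubset_def
  proof (rule inf01_greatest, clarify)
    fix B assume B: "B \<subseteq> G"
    show "1 \<le> min 1 (1 - R B + ?\<rho> B)"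
    proof (cases "\<exists>w\<in>G. B = Cf w \<inter> G")
      case True
      then obtain w where w: "w \<in> G" "B = Cf w \<inter> G" by blast
      have "preopen \<tau> (Cf w) \<le> ?\<rho> B" unfolding preopen_rel_def
        apply (rule sup01_upper) using w apply blast
        using preopen_b[OF T] by blast
      then show ?thesis using f' w B unfolding R_def by auto
    next
      case False
      then show ?thesis using rb unfolding R_def by auto
    qed
  qed simp
  let ?S = "sup01 {max 0 (Kcov P G + FF G P - 1) | P. fuzzy_family G P \<and> (\<forall>B. B \<subseteq> G \<longrightarrow> P B \<le> R B)}"
  have "Gamma G ?\<rho> \<le> min 1 (1 - max 0 (Kcov R G + fsubset G R ?\<rho> - 1) + ?S)"
    by (rule Gamma_le[OF Rff rb])
  then have "0 < ?S" using K FS g by linarith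
  then have "\<exists>u\<in>{max 0 (Kcov P G + FF G P - 1) | P. fuzzy_family G P \<and> (\<forall>B. B \<subseteq> G \<longrightarrow> P B \<le> R B)}. 0 < u"
    by (intro sup01_gt) auto
  then obtain P where P: "fuzzy_family G P" "\<forall>B. B \<subseteq> G \<longrightarrow> P B \<le> R B" "0 < max 0 (Kcov P G + FF G P - 1)"
    by blast
  let ?D = "{\<delta>. 0 \<le> \<delta> \<and> \<delta> \<le> 1 \<and> finite {B. B \<subseteq> G \<and> P B > \<delta>}}"
  have "inf01 ?D < Kcov P G" using P(3) unfolding FF_def by linarith
  moreover have "Kcov P G \<le> 1" using Kcov_b[of P G] ff_b[OF P(1)] by blast
  ultimately have "\<exists>\<delta>\<in>?D. \<delta> < Kcov P G" by (rule inf01_lt)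
  then obtain \<delta> where d: "0 \<le> \<delta>" "finite {B. B \<subseteq> G \<and> P B > \<delta>}" "\<delta> < Kcov P G"
    by blast
  define F where "F = {B. B \<subseteq> G \<and> P B > \<delta>}"
  have Fw: "\<exists>w\<in>G. B = Cf w \<inter> G" if B: "B \<in> F" for B
  proof (rule ccontr)
    assume "\<not> ?thesis"
    then have "R B = 0" unfolding R_def by auto
    moreover have "P B \<le> R B" "\<delta> < P B" using B P(2) unfolding F_def by auto
    ultimately show False using d(1) by linarith
  qed
  define wB where "wB B = (SOME w. w \<in> G \<and> B = Cf w \<inter> G)" for B
  have wB: "wB B \<in> G \<and> B = Cf (wB B) \<inter> G" if "B \<in> F" for B
    unfolding wB_def using someI_ex[OF Fw[OF that, unfolded Bex_def]] .
  define U where "U = (\<Inter>B\<in>F. Bf (wB B))"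
  have yU: "y \<in> U" unfolding U_def
  proof (rule InterI, clarify)
    fix B assume "B \<in> F"
    then show "y \<in> Bf (wB B)" using wB f' by blast
  qed
  have UG: "U \<inter> G = {}"
  proof (rule ccontr)
    assume "U \<inter> G \<noteq> {}"
    then obtain g where g: "g \<in> U" "g \<in> G" by blast
    have "Kcov P G \<le> sup01 {P B | B. g \<in> B \<and> B \<subseteq> G}"
      unfolding Kcov_def
      apply (rule inf01_lower) using g apply blast
      apply clarify
      apply (rule conjunct1[OF sup01_bounds])
      using ff_b[OF P(1)] by blast
    then have "\<exists>u\<in>{P B | B. g \<in> B \<and> B \<subseteq> G}. \<delta> < u"
      using d by (intro sup01_gt) auto
    then obtain B where B: "g \<in> B" "B \<subseteq> G" "\<delta> < P B" by blast
    then have BF: "B \<in> F" unfolding F_def by blast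
    have "g \<in> Cf (wB B)" using wB[OF BF] B by blast
    moreover have "g \<in> Bf (wB B)" using g BF unfolding U_def by blast
    ultimately show False using f' wB[OF BF] by blast
  qed
  have "a \<le> preopen \<tau> U" unfolding U_def
    apply (rule preopen_Inter[OF T pre])
    using d(2) F_def apply simp
     apply (rule a1)
    using wB f' by (meson less_imp_le)
  then show ?thesis using yU UG by blast
qed


lemma sup01_mono: "S \<subseteq> T \<Longrightarrow> \<forall>x\<in>T. 0 \<le> x \<and> x \<le> 1 \<Longrightarrow> sup01 S \<le> sup01 T"
proof -
  assume ST: "S \<subseteq> T" and h: "\<forall>x\<in>T. 0 \<le> x \<and> x \<le> 1"
  show ?thesis
  proof (cases "S = {}")
    case True then show ?thesis using sup01_bounds[OF h] by (simp add: sup01_def)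
  next
    case False
    then have "T \<noteq> {}" using ST by blast
    moreover have "Sup S \<le> Sup T"
      using False ST h by (intro cSup_subset_mono) (auto intro: bdd_aboveI[of _ 1])
    ultimately show ?thesis using False by (simp add: sup01_def)
  qed
qed

lemma fint_mono:
  assumes T: "fuzzifying_topology \<tau>" and W: "W \<subseteq> A"
  shows "finterior \<tau> (fclosure \<tau> W) x \<le> finterior \<tau> (fclosure \<tau> A) x"
proof -
  have cl: "fclosure \<tau> W z \<le> fclosure \<tau> A z" for z
  proof -
    have "nbhd \<tau> z (- A) \<le> nbhd \<tau> z (- W)" unfolding nbhd_def
      apply (rule sup01_mono) using W apply blast
      using topo_b[OF T] by blast
    then show ?thesis unfolding fclosure_def by simp
  qed
  have inf: "inf01 (fclosure \<tau> W ` B) \<le> inf01 (fclosure \<tau> A ` B)" for B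
  proof (cases "B = {}")
    case True then show ?thesis by simp
  next
    case False
    have "\<forall>z\<in>B. inf01 (fclosure \<tau> W ` B) \<le> fclosure \<tau> A z"
    proof
      fix z assume z: "z \<in> B"
      have "inf01 (fclosure \<tau> W ` B) \<le> fclosure \<tau> W z"
        apply (rule inf01_lower) using z apply blast
        using fclosure_b[OF T] by blast
      then show "inf01 (fclosure \<tau> W ` B) \<le> fclosure \<tau> A z" using cl[of z] by linarith
    qed
    moreover have "inf01 (fclosure \<tau> W ` B) \<le> 1"
      using inf01_bounds[of "fclosure \<tau> W ` B"] fclosure_b[OF T] by blast
    ultimately show ?thesis by (intro inf01_greatest) auto
  qed
  have b: "\<forall>u\<in>{min (\<tau> B) (inf01 (fclosure \<tau> A ` B)) | B. x \<in> B}. 0 \<le> u \<and> u \<le> 1"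
  proof clarify
    fix B
    have "0 \<le> inf01 (fclosure \<tau> A ` B) \<and> inf01 (fclosure \<tau> A ` B) \<le> 1"
      apply (rule inf01_bounds) using fclosure_b[OF T] by blast
    then show "0 \<le> min (\<tau> B) (inf01 (fclosure \<tau> A ` B)) \<and> min (\<tau> B) (inf01 (fclosure \<tau> A ` B)) \<le> 1"
      using topo_b[OF T, of B] by linarith
  qed
  show ?thesis unfolding finterior_def
  proof (rule sup01_least)
    show "\<forall>u\<in>{min (\<tau> B) (inf01 (fclosure \<tau> W ` B)) | B. x \<in> B}.
        u \<le> sup01 {min (\<tau> B) (inf01 (fclosure \<tau> A ` B)) | B. x \<in> B}"
    proof clarify
      fix B assume "x \<in> B"
      then have "min (\<tau> B) (inf01 (fclosure \<tau> A ` B)) \<le> sup01 {min (\<tau> B) (inf01 (fclosure \<tau> A ` B)) | B. x \<in> B}"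
        using b by (intro sup01_upper) auto
      then show "min (\<tau> B) (inf01 (fclosure \<tau> W ` B)) \<le> sup01 {min (\<tau> B) (inf01 (fclosure \<tau> A ` B)) | B. x \<in> B}"
        using inf[of B] by linarith
    qed
    show "0 \<le> sup01 {min (\<tau> B) (inf01 (fclosure \<tau> A ` B)) | B. x \<in> B}"
      using sup01_bounds[OF b] by blast
  qed
qed

lemma preopen_le_fint:
  assumes T: "fuzzifying_topology \<tau>" and x: "x \<in> W"
  shows "preopen \<tau> W \<le> finterior \<tau> (fclosure \<tau> W) x"
proof -
  have "\<forall>z. 0 \<le> fclosure \<tau> W z \<and> fclosure \<tau> W z \<le> 1" using fclosure_b[OF T] by blast
  note fb = finterior_b[OF T this]
  show ?thesis unfolding preopen_def
    apply (rule inf01_lower) using x apply blast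
    using fb by blast
qed


theorem theorem4p2:
  fixes \<tau> :: "'a set \<Rightarrow> real" and A :: "'a set"
  assumes "fuzzifying_topology \<tau>"
    and "\<forall>U V. preopen \<tau> (U \<inter> V) \<ge> min (preopen \<tau> U) (preopen \<tau> V)"
  shows "max 0 (T2P \<tau> + LPC \<tau> A + inf01 (range (pclosure \<tau> A)) - 2) \<le> preopen \<tau> A"
proof -
  note T = assms(1) and pre = assms(2)
  define t where "t = T2P \<tau>"
  define l where "l = LPC \<tau> A"
  define d where "d = inf01 (range (pclosure \<tau> A))"
  define M where "M = t + l + d - 2"
  have tb: "0 \<le> t \<and> t \<le> 1" unfolding t_def using T2P_b[OF T] .
  have lb: "0 \<le> l \<and> l \<le> 1" unfolding l_def using LPC_b[OF T] .
  have db: "0 \<le> d \<and> d \<le> 1" unfolding d_def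
    apply (rule inf01_bounds) using pclosure_b[OF T] by blast
  have claim: "\<exists>W. x \<in> W \<and> W \<subseteq> A \<and> c < preopen \<tau> W"
    if x: "x \<in> A" and c0: "0 \<le> c" and cM: "c < M" for x c
  proof -
    define \<eta> where "\<eta> = (M - c) / 4"
    have eta: "0 < \<eta>" "M = c + 4 * \<eta>" unfolding \<eta>_def using cM by (simp_all add: field_simps)
    let ?Sx = "{max 0 (pnbhd_rel \<tau> A x G + Gamma G (preopen_rel \<tau> G) - 1) | G. G \<subseteq> A}"
    have Sxb: "\<forall>u\<in>?Sx. 0 \<le> u \<and> u \<le> 1"
    proof clarify
      fix G
      have "0 \<le> pnbhd_rel \<tau> A x G \<and> pnbhd_rel \<tau> A x G \<le> 1" by (rule pnbhd_rel_b[OF T])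
      moreover have "0 \<le> Gamma G (preopen_rel \<tau> G) \<and> Gamma G (preopen_rel \<tau> G) \<le> 1"
        apply (rule Gamma_b) using preopen_rel_b[OF T] by blast
      ultimately show "0 \<le> max 0 (pnbhd_rel \<tau> A x G + Gamma G (preopen_rel \<tau> G) - 1) \<and>
          max 0 (pnbhd_rel \<tau> A x G + Gamma G (preopen_rel \<tau> G) - 1) \<le> 1" by linarith
    qed
    have "l \<le> sup01 ?Sx" unfolding l_def LPC_def
      apply (rule inf01_lower) using x apply blast
      apply clarify
      subgoal for u z using sup01_bounds[of "{max 0 (pnbhd_rel \<tau> A z G + Gamma G (preopen_rel \<tau> G) - 1) | G. G \<subseteq> A}"]
          pnbhd_rel_b[OF T, of A z] Gamma_b[of "preopen_rel \<tau> _"] preopen_rel_b[OF T]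
        by (smt (verit, best) mem_Collect_eq)
      done
    moreover have "0 \<le> l - \<eta>" using eta c0 tb db unfolding M_def by linarith
    ultimately have "\<exists>u\<in>?Sx. l - \<eta> < u" using eta(1) by (intro sup01_gt) auto
    then obtain G where G: "G \<subseteq> A" "l - \<eta> < max 0 (pnbhd_rel \<tau> A x G + Gamma G (preopen_rel \<tau> G) - 1)"
      by blast
    define \<Gamma> where "\<Gamma> = Gamma G (preopen_rel \<tau> G)"
    have Gb: "0 \<le> \<Gamma> \<and> \<Gamma> \<le> 1" unfolding \<Gamma>_def
      apply (rule Gamma_b) using preopen_rel_b[OF T] by blast
    have pg: "l - \<eta> < pnbhd_rel \<tau> A x G + \<Gamma> - 1"
      using G(2) eta c0 c0 tb db unfolding \<Gamma>_def M_def by linarith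
    define \<theta> where "\<theta> = l - \<eta> - \<Gamma> + 1"
    have th0: "0 \<le> \<theta>" using Gb eta c0 tb db unfolding \<theta>_def M_def by linarith
    have "\<exists>u\<in>{preopen_rel \<tau> A C | C. x \<in> C \<and> C \<subseteq> G}. \<theta> < u"
      apply (rule sup01_gt) using pg th0 unfolding \<theta>_def pnbhd_rel_def by auto
    then obtain C where C: "x \<in> C" "C \<subseteq> G" "\<theta> < preopen_rel \<tau> A C" by blast
    have "\<exists>u\<in>{preopen \<tau> V | V. V \<inter> A = C}. \<theta> < u"
      apply (rule sup01_gt) using C(3) th0 unfolding preopen_rel_def by auto
    then obtain V where V: "V \<inter> A = C" "\<theta> < preopen \<tau> V" by blast
    define p where "p = preopen \<tau> V"
    have pb: "0 \<le> p \<and> p \<le> 1" unfolding p_def by (rule preopen_b[OF T])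
    show ?thesis
    proof (cases "V \<subseteq> A")
      case True
      have "c < preopen \<tau> V" using V(2) eta c0 tb db Gb unfolding \<theta>_def M_def by linarith
      then show ?thesis using True C V by blast
    next
      case False
      then obtain y where y: "y \<in> V" "y \<notin> A" by blast
      have yG: "y \<notin> G" using y G(1) by blast
      define a where "a = t - \<eta>"
      have "pnbhd_rel \<tau> A x G \<le> 1" using pnbhd_rel_b[OF T] by blast
      then have "\<Gamma> > 1 - a" using pg eta c0 c0 tb db lb unfolding a_def M_def by linarith
      moreover have "0 \<le> a" "a < T2P \<tau>" using eta c0 tb db lb unfolding a_def M_def t_def by linarith+
      ultimately obtain U where U: "y \<in> U" "U \<inter> G = {}" "a \<le> preopen \<tau> U"
        using key[OF T pre yG] unfolding \<Gamma>_def by blast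
      have Z: "min (preopen \<tau> U) (preopen \<tau> V) \<le> preopen \<tau> (U \<inter> V)" using pre by blast
      have ZA: "U \<inter> V \<subseteq> - A" using U(2) V(1) C(2) by blast
      have "preopen \<tau> (U \<inter> V) \<le> pnbhd \<tau> y (- A)" unfolding pnbhd_def
        apply (rule sup01_upper) using y U(1) ZA apply blast
        using preopen_b[OF T] by blast
      moreover have "d \<le> pclosure \<tau> A y" unfolding d_def
        apply (rule inf01_lower) apply blast
        using pclosure_b[OF T] by blast
      ultimately have "d \<le> 1 - min (preopen \<tau> U) p" using Z unfolding pclosure_def p_def by linarith
      then have False
        using U(3) V(2) eta c0 tb db lb Gb c0 unfolding p_def a_def \<theta>_def M_def min_def
        by (smt (verit))
      then show ?thesis ..
    qed
  qed
  have "\<forall>x\<in>A. M \<le> finterior \<tau> (fclosure \<tau> A) x"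
  proof
    fix x assume x: "x \<in> A"
    show "M \<le> finterior \<tau> (fclosure \<tau> A) x"
    proof (rule dense_le)
      fix c assume cM: "c < M"
      show "c \<le> finterior \<tau> (fclosure \<tau> A) x"
      proof (cases "0 \<le> c")
        case False
        have "\<forall>z. 0 \<le> fclosure \<tau> A z \<and> fclosure \<tau> A z \<le> 1" using fclosure_b[OF T] by blast
        then have "0 \<le> finterior \<tau> (fclosure \<tau> A) x" using finterior_b[OF T] by blast
        then show ?thesis using False by linarith
      next
        case True
        then obtain W where W: "x \<in> W" "W \<subseteq> A" "c < preopen \<tau> W" using claim[OF x _ cM] by blast
        show ?thesis using preopen_le_fint[OF T W(1)] fint_mono[OF T W(2), of x] W(3) by linarith
      qed
    qed
  qed
  moreover have "M \<le> 1" using tb lb db unfolding M_def by linarith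
  ultimately have "M \<le> preopen \<tau> A" unfolding preopen_def by (intro inf01_greatest) auto
  then show ?thesis using preopen_b[OF T, of A] unfolding M_def t_def l_def d_def by linarith
qed

end
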